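(* Let $\bm{A}=[\bm{A}_1\ \bm{A}_2]$ have full column rank with $\bm{A}_j^\top\bm{A}_j=\bm{I}_j$, $\bm{C}:=\bm{A}_2^\top\bm{A}_1\ne0$, $r:=\operatorname{rank}(\bm{C})$. Then $\min_{\gamma_1>0}\rho(\bm{M}(\gamma_1,1))=\dfrac{\lambda_1(\bm{C}\bm{C}^\top)}{2-\lambda_1(\bm{C}\bm{C}^\top)}$ if $r<n_1$, attained at $\gamma_1=\frac{2}{2-\lambda_1(\bm{C}\bm{C}^\top)}$; and $\min_{\gamma_1>0}\rho(\bm{M}(\gamma_1,1))=\dfrac{\lambda_1(\bm{C}\bm{C}^\top)-\lambda_r(\bm{C}\bm{C}^\top)}{2-\lambda_1(\bm{C}\bm{C}^\top)-\lambda_r(\bm{C}\bm{C}^\top)}$ if $r=n_1$, attained (when $r=n_1>1$) at $\gamma_1=\frac{2}{2-\lambda_1(\bm{C}\bm{C}^\top)-\lambda_r(\bm{C}\bm{C}^\top)}$.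
   Context: $\rho$: spectral radius; $\lambda_i$: $i$-th largest eigenvalue. $\bm{M}(\gamma_1,\gamma_2)=\begin{bmatrix}(1-\gamma_1)\bm{I}_1&-\gamma_1\bm{C}^\top\\-\gamma_2(1-\gamma_1)\bm{C}&(1-\gamma_2)\bm{I}_2+\gamma_1\gamma_2\bm{C}\bm{C}^\top\end{bmatrix}$, the two-block gradient descent iteration matrix with stepsizes $\gamma_1,\gamma_2$ for $\frac12\|\bm{A}\bm{x}-\bm{y}\|^2$ under $\bm{A}_j^\top\bm{A}_j=\bm{I}_j$. *)

theory Defs
  imports "Jordan_Normal_Form.Spectral_Radius" "Jordan_Normal_Form.DL_Rank" "HOL-Library.Multiset"
begin

definition hcat :: "real mat \<Rightarrow> real mat \<Rightarrow> real mat" where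
  "hcat A1 A2 = mat (dim_row A1) (dim_col A1 + dim_col A2)
     (\<lambda>(i,j). if j < dim_col A1 then A1 $$ (i,j) else A2 $$ (i, j - dim_col A1))"

text \<open>Two-block gradient descent iteration matrix M(g1,g2) built from C (of size n2 x n1).\<close>
definition Mmat :: "real mat \<Rightarrow> real \<Rightarrow> real \<Rightarrow> real mat" where
  "Mmat C g1 g2 = four_block_mat
      ((1 - g1) \<cdot>\<^sub>m 1\<^sub>m (dim_col C))              ((- g1) \<cdot>\<^sub>m C\<^sup>T)
      ((- (g2 * (1 - g1))) \<cdot>\<^sub>m C)  ((1 - g2) \<cdot>\<^sub>m 1\<^sub>m (dim_row C) + (g1 * g2) \<cdot>\<^sub>m (C * C\<^sup>T))"

definition rho :: "real mat \<Rightarrow> real" where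
  "rho B = spectral_radius (map_mat complex_of_real B)"

text \<open>Eigenvalues (roots of the characteristic polynomial, with multiplicity) in
  non-increasing order; lam i B is the i-th largest eigenvalue (1-based).\<close>
definition eigs_desc :: "real mat \<Rightarrow> real list" where
  "eigs_desc B = rev (sorted_list_of_multiset (proots (char_poly B)))"

definition lam :: "nat \<Rightarrow> real mat \<Rightarrow> real" where
  "lam i B = eigs_desc B ! (i - 1)"

end

theory Submission
  imports Defs
begin

lemma opt_ineq:
  fixes p q g :: real
  assumes "0 < p" "p \<le> q" "0 < g"
  shows "(q - p) / (q + p) \<le> max \<bar>1 - g*p\<bar> \<bar>1 - g*q\<bar>"
proof -
  have "q - p = q*(1-g*p) - p*(1-g*q)" by (simp add: algebra_simps)
  also have "\<dots> \<le> q*\<bar>1-g*p\<bar> + p*\<bar>1-g*q\<bar>"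
  proof -
    have "q*(1-g*p) \<le> q*\<bar>1-g*p\<bar>" using assms by (intro mult_left_mono) auto
    moreover have "p*(-(1-g*q)) \<le> p*\<bar>1-g*q\<bar>" using assms by (intro mult_left_mono) auto
    ultimately show ?thesis by linarith
  qed
  also have "\<dots> \<le> q * max \<bar>1 - g*p\<bar> \<bar>1 - g*q\<bar> + p * max \<bar>1 - g*p\<bar> \<bar>1 - g*q\<bar>"
    using assms by (intro add_mono mult_left_mono) auto
  finally have "q - p \<le> (q+p) * max \<bar>1 - g*p\<bar> \<bar>1 - g*q\<bar>" by (simp add: algebra_simps)
  thus ?thesis using assms by (simp add: divide_le_eq mult.commute)
qed

lemma opt_lemma:
  fixes S :: "real set" and f :: "real \<Rightarrow> real"
  assumes fin: "finite S" and ne: "S \<noteq> {}" and rng: "\<forall>\<mu>\<in>S. 0 \<le> \<mu> \<and> \<mu> < 1"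
    and f: "\<And>g. f g = Max ((\<lambda>\<mu>. \<bar>1 - g*(1-\<mu>)\<bar>) ` S)"
  shows "Inf (f ` {0<..}) = (Max S - Min S)/(2 - Max S - Min S)"
    and "f (2/(2 - Max S - Min S)) = (Max S - Min S)/(2 - Max S - Min S)"
proof -
  define a where "a = Max S"
  define b where "b = Min S"
  have aS: "a \<in> S" and bS: "b \<in> S" using fin ne a_def b_def by auto
  have ab: "\<forall>\<mu>\<in>S. b \<le> \<mu> \<and> \<mu> \<le> a" using fin a_def b_def by auto
  have a1: "a < 1" "0 \<le> b" using rng aS bS by auto
  have bnd: "(a-b)/(2-a-b) \<le> f g" if "g > 0" for g
  proof -
    have "(a-b)/(2-a-b) = ((1-b)-(1-a))/((1-b)+(1-a))" by (simp add: algebra_simps)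
    also have "\<dots> \<le> max \<bar>1 - g*(1-a)\<bar> \<bar>1 - g*(1-b)\<bar>"
      by (rule opt_ineq) (use a1 ab aS that in auto)
    also have "\<dots> \<le> f g" unfolding f using fin aS bS by (auto intro: Max_ge)
    finally show ?thesis .
  qed
  define gs where "gs = 2/(2-a-b)"
  have gs0: "gs > 0" using a1 ab aS unfolding gs_def by auto
  have up: "f gs \<le> (a-b)/(2-a-b)"
    unfolding f
  proof (rule Max.boundedI)
    show "finite ((\<lambda>\<mu>. \<bar>1 - gs*(1-\<mu>)\<bar>) ` S)" using fin by simp
    show "(\<lambda>\<mu>. \<bar>1 - gs*(1-\<mu>)\<bar>) ` S \<noteq> {}" using ne by simp
  next
    fix y assume "y \<in> (\<lambda>\<mu>. \<bar>1 - gs*(1-\<mu>)\<bar>) ` S"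
    then obtain \<mu> where "\<mu> \<in> S" and y: "y = \<bar>1 - gs*(1-\<mu>)\<bar>" by auto
    hence m: "b \<le> \<mu>" "\<mu> \<le> a" using ab by auto
    have den: "2 - a - b > 0" using a1 ab aS by auto
    have "1 - gs*(1-\<mu>) = (2*\<mu> - a - b)/(2-a-b)" unfolding gs_def using den
      by (simp add: field_simps)
    hence "\<bar>1 - gs*(1-\<mu>)\<bar> = \<bar>2*\<mu> - a - b\<bar>/(2-a-b)" using den by simp
    also have "\<dots> \<le> (a-b)/(2-a-b)" using den m by (intro divide_right_mono) auto
    finally show "y \<le> (a-b)/(2-a-b)" unfolding y .
  qed
  have eq: "f gs = (a-b)/(2-a-b)" using up bnd[OF gs0] by auto
  show "f (2/(2 - Max S - Min S)) = (Max S - Min S)/(2 - Max S - Min S)"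
    using eq unfolding gs_def a_def b_def .
  have "Inf (f ` {0<..}) = (a-b)/(2-a-b)"
  proof -
    have "Inf (f ` {0<..}) = f gs"
    proof (rule cInf_eq_minimum)
      show "f gs \<in> f ` {0<..}" using gs0 by simp
      fix x assume "x \<in> f ` {0<..}"
      thus "f gs \<le> x" using bnd eq by auto
    qed
    thus ?thesis using eq by simp
  qed
  thus "Inf (f ` {0<..}) = (Max S - Min S)/(2 - Max S - Min S)" unfolding a_def b_def .
qed


lemma rank_kernel:
  fixes A :: "real mat"
  assumes A: "A \<in> carrier_mat n nc" and r: "vec_space.rank n A = nc"
    and v: "v \<in> carrier_vec nc" and Av: "A *\<^sub>v v = 0\<^sub>v n"
  shows "v = 0\<^sub>v nc"
proof -
  interpret vec_space "TYPE(real)" n .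
  have dist: "distinct (cols A)"
  proof (rule ccontr)
    assume nd: "\<not> distinct (cols A)"
    obtain S where S: "maximal S (\<lambda>T. T \<subseteq> set (cols A) \<and> lin_indpt T)"
      using maximal_exists[of "(\<lambda>T. T \<subseteq> set (cols A) \<and> lin_indpt T)" "card (set (cols A))" "{}"]
      by (meson List.finite_set card_mono empty_iff empty_subsetI finite_lin_indpt2 rev_finite_subset)
    then have "card S \<le> card (set (cols A))" by (simp add: card_mono maximal_def)
    also have "\<dots> < length (cols A)"
    proof -
      have "card (set (cols A)) \<noteq> length (cols A)" using nd card_distinct by blast
      thus ?thesis using card_length[of "cols A"] by linarith
    qed
    also have "\<dots> = nc" using A by simp
    finally have "card S < nc" .
    with rank_card_indpt[OF A S] r show False by simp
  qed
  from full_rank_lin_indpt[OF A r dist] have "\<not> lin_dep (set (cols A))" .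
  thus ?thesis using lin_depI[OF A v _ Av dist] by blast
qed

lemma rank_kernel2:
  fixes A :: "real mat"
  assumes A: "A \<in> carrier_mat n nc" and r: "vec_space.rank n A \<noteq> nc"
  shows "\<exists>v \<in> carrier_vec nc. v \<noteq> 0\<^sub>v nc \<and> A *\<^sub>v v = 0\<^sub>v n"
proof (cases "distinct (cols A)")
  case True
  interpret vec_space "TYPE(real)" n .
  have "lin_dep (set (cols A))" using lin_indpt_full_rank[OF A True] r by blast
  from lin_depE[OF A this True] show ?thesis by blast
next
  case False
  then obtain i j where ij: "i < length (cols A)" "j < length (cols A)" "i \<noteq> j" "cols A ! i = cols A ! j"
    by (auto simp: distinct_conv_nth)
  hence ij': "i < nc" "j < nc" using A by auto
  define v :: "real vec" where "v = unit_vec nc i - unit_vec nc j"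
  have vc: "v \<in> carrier_vec nc" unfolding v_def by simp
  have "v $ i = 1" using ij' ij(3) unfolding v_def by (simp add: index_unit_vec)
  hence vn: "v \<noteq> 0\<^sub>v nc" using ij' by auto
  have colij: "col A i = col A j" using ij A by auto
  have "A *\<^sub>v v = 0\<^sub>v n"
  proof (rule eq_vecI)
    show "dim_vec (A *\<^sub>v v) = dim_vec (0\<^sub>v n)" using A by simp
    fix k assume "k < dim_vec (0\<^sub>v n)"
    hence k: "k < n" by simp
    have "(A *\<^sub>v v) $ k = row A k \<bullet> v" using A k by simp
    also have "\<dots> = row A k \<bullet> unit_vec nc i - row A k \<bullet> unit_vec nc j"
      unfolding v_def by (rule scalar_prod_minus_distrib[of _ nc]) (use A k in auto)
    also have "\<dots> = A $$ (k,i) - A $$ (k,j)" using A k ij' by simp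
    also have "A $$ (k,i) = A $$ (k,j)" using colij A k ij'
      by (metis carrier_matD(1) col_def index_vec)
    finally show "(A *\<^sub>v v) $ k = 0\<^sub>v n $ k" using k by simp
  qed
  thus ?thesis using vc vn by blast
qed


lemma sq_pos: "(v::real vec) \<in> carrier_vec n \<Longrightarrow> v \<noteq> 0\<^sub>v n \<Longrightarrow> v \<bullet> v > 0"
  using conjugate_square_greater_0_vec[of v n] by simp

lemma sq_nonneg: "0 \<le> (v::real vec) \<bullet> v"
  using conjugate_square_ge_0_vec[of v] by simp

lemma sq_zero: "(v::real vec) \<in> carrier_vec n \<Longrightarrow> v \<bullet> v = 0 \<Longrightarrow> v = 0\<^sub>v n"
  using conjugate_square_eq_0_vec[of v n] by simp

lemma tr_sp: "X \<in> carrier_mat r c \<Longrightarrow> a \<in> carrier_vec c \<Longrightarrow> b \<in> carrier_vec r \<Longrightarrow>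
   (X *\<^sub>v a) \<bullet> b = a \<bullet> ((X\<^sup>T) *\<^sub>v b)"
  for X :: "real mat"
  using transpose_vec_mult_scalar[of X r c a b] comm_scalar_prod[of "X *\<^sub>v a" r b]
    comm_scalar_prod[of a c "X\<^sup>T *\<^sub>v b"] by auto

locale setting =
  fixes A1 A2 :: "real mat" and m n1 n2 :: nat
  assumes A1: "A1 \<in> carrier_mat m n1" and A2: "A2 \<in> carrier_mat m n2"
    and rk: "vec_space.rank m (hcat A1 A2) = n1 + n2"
    and o1: "A1\<^sup>T * A1 = 1\<^sub>m n1" and o2: "A2\<^sup>T * A2 = 1\<^sub>m n2"
begin

definition "C = A2\<^sup>T * A1"
definition "G = C\<^sup>T * C"

lemma C: "C \<in> carrier_mat n2 n1" unfolding C_def using A1 A2 by auto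
lemma G: "G \<in> carrier_mat n1 n1" unfolding G_def using C by auto

lemma hcat_four: "hcat A1 A2 = four_block_mat A1 A2 (0\<^sub>m 0 n1) (0\<^sub>m 0 n2)"
  by (rule eq_matI) (use A1 A2 in \<open>auto simp: hcat_def\<close>)

lemma hcat: "hcat A1 A2 \<in> carrier_mat m (n1+n2)"
  unfolding hcat_four using A1 A2 by auto

lemma hcat_mult: assumes a: "a \<in> carrier_vec n1" and d: "d \<in> carrier_vec n2"
  shows "hcat A1 A2 *\<^sub>v (a @\<^sub>v d) = A1 *\<^sub>v a + A2 *\<^sub>v d"
proof -
  have "hcat A1 A2 *\<^sub>v (a @\<^sub>v d) = (A1 *\<^sub>v a + A2 *\<^sub>v d) @\<^sub>v (0\<^sub>m 0 n1 *\<^sub>v a + 0\<^sub>m 0 n2 *\<^sub>v d)"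
    unfolding hcat_four by (rule four_block_mat_mult_vec[OF A1 A2 _ _ a d]) auto
  also have "\<dots> = A1 *\<^sub>v a + A2 *\<^sub>v d"
    by (rule eq_vecI) (use A1 A2 a d in auto)
  finally show ?thesis .
qed

lemma strict:
  assumes w: "w \<in> carrier_vec n1" and w0: "w \<noteq> 0\<^sub>v n1"
  shows "(C *\<^sub>v w) \<bullet> (C *\<^sub>v w) < w \<bullet> w"
proof -
  define y where "y = A1 *\<^sub>v w"
  define z where "z = C *\<^sub>v w"
  define p where "p = A2 *\<^sub>v z"
  have y: "y \<in> carrier_vec m" and z: "z \<in> carrier_vec n2" and p: "p \<in> carrier_vec m"
    unfolding y_def z_def p_def using A1 A2 C w by auto
  have zy: "z = A2\<^sup>T *\<^sub>v y" unfolding z_def y_def C_def using A1 A2 w by auto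
  define u where "u = w @\<^sub>v (- z)"
  have u: "u \<in> carrier_vec (n1+n2)" unfolding u_def using w z by auto
  have u0: "u \<noteq> 0\<^sub>v (n1+n2)"
  proof
    assume "u = 0\<^sub>v (n1+n2)"
    hence "\<forall>i<n1. w $ i = 0" unfolding u_def using w z
      by (metis add.commute carrier_vecD index_append_vec(1) index_zero_vec(1) trans_less_add2)
    hence "w = 0\<^sub>v n1" using w by (intro eq_vecI) auto
    with w0 show False by simp
  qed
  have x: "hcat A1 A2 *\<^sub>v u = y - p"
  proof -
    have "hcat A1 A2 *\<^sub>v u = A1 *\<^sub>v w + A2 *\<^sub>v (- z)"
      unfolding u_def by (rule hcat_mult) (use w z in auto)
    also have "A2 *\<^sub>v (- z) = - p" unfolding p_def using A2 z
      by (intro eq_vecI) auto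
    finally show ?thesis unfolding y_def using y p by auto
  qed
  have x0: "y - p \<noteq> 0\<^sub>v m"
    using rank_kernel[OF hcat rk u] u0 x by auto
  have pos: "(y - p) \<bullet> (y - p) > 0" using sq_pos[OF _ x0] y p by auto
  have yy: "y \<bullet> y = w \<bullet> w"
  proof -
    have "y \<bullet> y = w \<bullet> (A1\<^sup>T *\<^sub>v y)" unfolding y_def by (rule tr_sp[OF A1 w]) (use A1 w in auto)
    also have "A1\<^sup>T *\<^sub>v y = (A1\<^sup>T * A1) *\<^sub>v w" unfolding y_def using A1 w by auto
    also have "\<dots> = w" unfolding o1 using w by auto
    finally show ?thesis .
  qed
  have py: "p \<bullet> y = z \<bullet> z"
    unfolding p_def using tr_sp[OF A2 z y] zy by simp
  have yp: "y \<bullet> p = z \<bullet> z" using py comm_scalar_prod[OF y p] by simp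
  have pp: "p \<bullet> p = z \<bullet> z"
  proof -
    have "p \<bullet> p = z \<bullet> (A2\<^sup>T *\<^sub>v p)" unfolding p_def by (rule tr_sp[OF A2 z]) (use A2 z in auto)
    also have "A2\<^sup>T *\<^sub>v p = (A2\<^sup>T * A2) *\<^sub>v z" unfolding p_def using A2 z by auto
    also have "\<dots> = z" unfolding o2 using z by auto
    finally show ?thesis .
  qed
  have "(y - p) \<bullet> (y - p) = y \<bullet> y - y \<bullet> p - (p \<bullet> y - p \<bullet> p)"
    using y p by (simp add: minus_scalar_prod_distrib[of _ m] scalar_prod_minus_distrib[of _ m])
  also have "\<dots> = w \<bullet> w - z \<bullet> z" using yy yp py pp by simp
  finally show ?thesis using pos unfolding z_def by simp
qed

lemma quad: assumes a: "a \<in> carrier_vec n1" and b: "b \<in> carrier_vec n1"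
  shows "a \<bullet> (G *\<^sub>v b) = (C *\<^sub>v a) \<bullet> (C *\<^sub>v b)"
proof -
  have "(C *\<^sub>v a) \<bullet> (C *\<^sub>v b) = a \<bullet> (C\<^sup>T *\<^sub>v (C *\<^sub>v b))" by (rule tr_sp[OF C a]) (use C b in auto)
  also have "C\<^sup>T *\<^sub>v (C *\<^sub>v b) = G *\<^sub>v b" unfolding G_def using C b by auto
  finally show ?thesis by simp
qed

lemma symm: assumes a: "a \<in> carrier_vec n1" and b: "b \<in> carrier_vec n1"
  shows "a \<bullet> (G *\<^sub>v b) = b \<bullet> (G *\<^sub>v a)"
  unfolding quad[OF a b] quad[OF b a] by (rule comm_scalar_prod[of _ n2]) (use C a b in auto)

end


lemma re_mult: fixes X :: "real mat" and u :: "complex vec"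
  assumes X: "X \<in> carrier_mat r c" and u: "u \<in> carrier_vec c"
  shows "map_vec Re (map_mat complex_of_real X *\<^sub>v u) = X *\<^sub>v map_vec Re u"
    and "map_vec Im (map_mat complex_of_real X *\<^sub>v u) = X *\<^sub>v map_vec Im u"
  by (rule eq_vecI; use X u in \<open>auto simp: scalar_prod_def Re_sum Im_sum\<close>)+

context setting begin

definition "Gc = map_mat complex_of_real G"
lemma Gc: "Gc \<in> carrier_mat n1 n1" unfolding Gc_def using G by auto

lemma real_eig:
  assumes w: "w \<in> carrier_vec n1" and w0: "w \<noteq> 0\<^sub>v n1" and ev: "G *\<^sub>v w = \<alpha> \<cdot>\<^sub>v w"
  shows "0 \<le> \<alpha> \<and> \<alpha> < 1 \<and> (\<alpha> = 0 \<longrightarrow> C *\<^sub>v w = 0\<^sub>v n2)"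
proof -
  have ww: "w \<bullet> w > 0" by (rule sq_pos[OF w w0])
  have "\<alpha> * (w \<bullet> w) = w \<bullet> (G *\<^sub>v w)" unfolding ev using w by simp
  also have "\<dots> = (C *\<^sub>v w) \<bullet> (C *\<^sub>v w)" by (rule quad[OF w w])
  finally have eq: "\<alpha> * (w \<bullet> w) = (C *\<^sub>v w) \<bullet> (C *\<^sub>v w)" .
  have "\<alpha> * (w \<bullet> w) \<ge> 0" unfolding eq by (rule sq_nonneg)
  hence a0: "\<alpha> \<ge> 0" using ww by (simp add: zero_le_mult_iff)
  have "\<alpha> * (w \<bullet> w) < 1 * (w \<bullet> w)" unfolding eq using strict[OF w w0] by simp
  hence a1: "\<alpha> < 1" using ww by (simp add: mult_less_cancel_right)
  have "\<alpha> = 0 \<longrightarrow> C *\<^sub>v w = 0\<^sub>v n2"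
  proof
    assume "\<alpha> = 0"
    hence "(C *\<^sub>v w) \<bullet> (C *\<^sub>v w) = 0" using eq by simp
    thus "C *\<^sub>v w = 0\<^sub>v n2" using sq_zero[of "C *\<^sub>v w" n2] C w by auto
  qed
  thus ?thesis using a0 a1 by auto
qed

lemma cplx_eig:
  assumes ev: "eigenvector Gc u k"
  shows "Im k = 0 \<and> (\<exists>w\<in>carrier_vec n1. w \<noteq> 0\<^sub>v n1 \<and> G *\<^sub>v w = Re k \<cdot>\<^sub>v w)"
proof -
  have u: "u \<in> carrier_vec n1" and u0: "u \<noteq> 0\<^sub>v n1" and eu: "Gc *\<^sub>v u = k \<cdot>\<^sub>v u"
    using ev Gc unfolding eigenvector_def by auto
  define a where "a = map_vec Re u"
  define b where "b = map_vec Im u"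
  define \<alpha> where "\<alpha> = Re k"
  define \<beta> where "\<beta> = Im k"
  have a: "a \<in> carrier_vec n1" and b: "b \<in> carrier_vec n1" unfolding a_def b_def using u by auto
  have Ga: "G *\<^sub>v a = \<alpha> \<cdot>\<^sub>v a - \<beta> \<cdot>\<^sub>v b"
  proof -
    have "G *\<^sub>v a = map_vec Re (Gc *\<^sub>v u)" unfolding a_def Gc_def by (rule re_mult(1)[OF G u, symmetric])
    also have "\<dots> = \<alpha> \<cdot>\<^sub>v a - \<beta> \<cdot>\<^sub>v b" unfolding eu a_def b_def \<alpha>_def \<beta>_def
      by (rule eq_vecI) auto
    finally show ?thesis .
  qed
  have Gb: "G *\<^sub>v b = \<beta> \<cdot>\<^sub>v a + \<alpha> \<cdot>\<^sub>v b"
  proof -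
    have "G *\<^sub>v b = map_vec Im (Gc *\<^sub>v u)" unfolding b_def Gc_def by (rule re_mult(2)[OF G u, symmetric])
    also have "\<dots> = \<beta> \<cdot>\<^sub>v a + \<alpha> \<cdot>\<^sub>v b" unfolding eu a_def b_def \<alpha>_def \<beta>_def
      by (rule eq_vecI) (auto simp: algebra_simps)
    finally show ?thesis .
  qed
  have ab: "a \<bullet> b = b \<bullet> a" by (rule comm_scalar_prod[OF a b])
  have e1: "a \<bullet> (G *\<^sub>v b) = \<beta> * (a \<bullet> a) + \<alpha> * (a \<bullet> b)"
    unfolding Gb using a b by (simp add: scalar_prod_add_distrib[of _ n1])
  have e2: "b \<bullet> (G *\<^sub>v a) = \<alpha> * (b \<bullet> a) - \<beta> * (b \<bullet> b)"
    unfolding Ga using a b by (simp add: scalar_prod_minus_distrib[of _ n1])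
  have "\<beta> * (a \<bullet> a + b \<bullet> b) = 0" using symm[OF a b] e1 e2 ab by (simp add: algebra_simps)
  moreover have nz: "a \<noteq> 0\<^sub>v n1 \<or> b \<noteq> 0\<^sub>v n1"
  proof (rule ccontr)
    assume "\<not> ?thesis"
    hence "a = 0\<^sub>v n1" "b = 0\<^sub>v n1" by auto
    hence "u = 0\<^sub>v n1"
    proof (intro eq_vecI)
      fix i assume "a = 0\<^sub>v n1" "b = 0\<^sub>v n1" "i < dim_vec (0\<^sub>v n1)"
      hence "a $ i = 0" "b $ i = 0" "i < n1" by auto
      thus "u $ i = 0\<^sub>v n1 $ i" using u unfolding a_def b_def by (auto simp: complex_eq_iff)
    qed (use u in auto)
    with u0 show False by simp
  qed
  moreover have "a \<bullet> a + b \<bullet> b > 0"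
    using nz sq_pos[OF a] sq_pos[OF b] sq_nonneg[of a] sq_nonneg[of b] by fastforce
  ultimately have b0: "\<beta> = 0" by simp
  show ?thesis
  proof (cases "a = 0\<^sub>v n1")
    case False
    have "\<alpha> \<cdot>\<^sub>v a - 0 \<cdot>\<^sub>v b = \<alpha> \<cdot>\<^sub>v a" by (rule eq_vecI) (use a b in auto)
    thus ?thesis using False a Ga b0 b unfolding \<alpha>_def \<beta>_def by auto
  next
    case True
    hence "b \<noteq> 0\<^sub>v n1" using nz by auto
    moreover have "0 \<cdot>\<^sub>v a + \<alpha> \<cdot>\<^sub>v b = \<alpha> \<cdot>\<^sub>v b" by (rule eq_vecI) (use a b in auto)
    ultimately show ?thesis using b Gb b0 a unfolding \<alpha>_def \<beta>_def by auto
  qed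
qed

lemma eigval_Gc:
  assumes "eigenvalue Gc k"
  shows "k = complex_of_real (Re k) \<and> 0 \<le> Re k \<and> Re k < 1 \<and>
    (Re k = 0 \<longrightarrow> (\<exists>w\<in>carrier_vec n1. w \<noteq> 0\<^sub>v n1 \<and> C *\<^sub>v w = 0\<^sub>v n2))"
proof -
  obtain u where "eigenvector Gc u k" using assms unfolding eigenvalue_def by auto
  from cplx_eig[OF this] obtain w where im: "Im k = 0" and w: "w \<in> carrier_vec n1" "w \<noteq> 0\<^sub>v n1"
    "G *\<^sub>v w = Re k \<cdot>\<^sub>v w" by auto
  from real_eig[OF w] im show ?thesis using w by (auto simp: complex_eq_iff)
qed

end


lemma prod_of_real_aux:
  assumes "\<forall>e\<in>set es. e = complex_of_real (Re e)"
  shows "(\<Prod>e\<leftarrow>es. complex_of_real x - e) = complex_of_real (\<Prod>e\<leftarrow>es. x - Re e)"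
  using assms by (induction es) auto

lemma proots_lin: "proots (\<Prod>d\<leftarrow>ds. [:- d, 1:]) = mset (ds :: real list)"
proof -
  have "proots (\<Prod>d\<leftarrow>ds. [:- d, 1:]) = sum_list (map proots (map (\<lambda>d. [:- d, 1:]) ds))"
  proof -
    have nz: "0 \<notin> (\<lambda>d. [:- d, 1:]) ` set ds" by auto
    show ?thesis using proots_prod_list[of "map (\<lambda>d. [:- d, 1:]) ds"] nz by (auto simp: o_def)
  qed
  also have "\<dots> = (\<Sum>d\<leftarrow>ds. {#d#})" by (simp add: o_def)
  also have "\<dots> = mset ds" by (simp add: sum_list_singleton_mset)
  finally show ?thesis .
qed

context setting begin

lemma split: "\<exists>ds. length ds = n1 \<and> char_poly G = (\<Prod>d\<leftarrow>ds. [:- d, 1:]) \<and>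
   (\<forall>d\<in>set ds. 0 \<le> d \<and> d < 1) \<and> spectrum Gc = complex_of_real ` set ds"
proof -
  obtain es where cp: "char_poly Gc = (\<Prod>a\<leftarrow>es. [:- a, 1:])" and len: "length es = n1"
    using char_poly_factorized[OF Gc] by auto
  have ev: "eigenvalue Gc e" if "e \<in> set es" for e
    unfolding eigenvalue_root_char_poly[OF Gc] cp using linear_poly_root[OF that] .
  have er: "\<forall>e\<in>set es. e = complex_of_real (Re e)" using eigval_Gc[OF ev] by blast
  define ds where "ds = map Re es"
  have cpc: "char_poly Gc = map_poly complex_of_real (char_poly G)"
    unfolding Gc_def using of_real_hom.char_poly_hom[OF G] by simp
  have "poly (char_poly G) = poly (\<Prod>d\<leftarrow>ds. [:- d, 1:])"
  proof
    fix x
    have "complex_of_real (poly (char_poly G) x) = poly (char_poly Gc) (complex_of_real x)"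
      unfolding cpc by simp
    also have "\<dots> = (\<Prod>e\<leftarrow>es. complex_of_real x - e)" unfolding cp
      by (simp add: poly_prod_list o_def)
    also have "\<dots> = complex_of_real (\<Prod>e\<leftarrow>es. x - Re e)" by (rule prod_of_real_aux[OF er])
    also have "(\<Prod>e\<leftarrow>es. x - Re e) = poly (\<Prod>d\<leftarrow>ds. [:- d, 1:]) x"
      unfolding ds_def by (simp add: poly_prod_list o_def)
    finally show "poly (char_poly G) x = poly (\<Prod>d\<leftarrow>ds. [:- d, 1:]) x" by simp
  qed
  hence c1: "char_poly G = (\<Prod>d\<leftarrow>ds. [:- d, 1:])" by (simp add: poly_eq_poly_eq_iff)
  have c2: "\<forall>d\<in>set ds. 0 \<le> d \<and> d < 1" unfolding ds_def using eigval_Gc[OF ev] by auto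
  have "spectrum Gc = {k. poly (char_poly Gc) k = 0}" by (rule spectrum_root_char_poly[OF Gc])
  also have "\<dots> = set es" unfolding cp by (auto simp: poly_prod_list_zero_iff)
  also have "\<dots> = complex_of_real ` set ds" unfolding ds_def using er by force
  finally have c3: "spectrum Gc = complex_of_real ` set ds" .
  have "length ds = n1" by (simp add: ds_def len)
  with c1 c2 c3 show ?thesis by blast
qed

end


lemma map_smult_c: "map_mat complex_of_real (k \<cdot>\<^sub>m A) = complex_of_real k \<cdot>\<^sub>m map_mat complex_of_real A"
  by (rule eq_matI) auto

lemma smult_mv: fixes A :: "'a :: comm_ring mat"
  shows "A \<in> carrier_mat r c \<Longrightarrow> v \<in> carrier_vec c \<Longrightarrow> (k \<cdot>\<^sub>m A) *\<^sub>v v = k \<cdot>\<^sub>v (A *\<^sub>v v)"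
  by (intro eq_vecI) (auto simp: scalar_prod_def sum_distrib_left ac_simps)

lemma smult_append: "k \<cdot>\<^sub>v (a @\<^sub>v d) = (k \<cdot>\<^sub>v a) @\<^sub>v (k \<cdot>\<^sub>v d)"
  by (intro eq_vecI) (auto simp: index_append_vec)

context setting begin

definition "Cc = map_mat complex_of_real C"
definition "CTc = map_mat complex_of_real (C\<^sup>T)"
definition "Mc g = map_mat complex_of_real (Mmat C g 1)"
definition "r1 g a d = complex_of_real (1-g) \<cdot>\<^sub>v a + complex_of_real (-g) \<cdot>\<^sub>v (CTc *\<^sub>v d)"

lemma Cc: "Cc \<in> carrier_mat n2 n1" unfolding Cc_def using C by auto
lemma CTc: "CTc \<in> carrier_mat n1 n2" unfolding CTc_def using C by auto
lemma Gc_prod: "Gc = CTc * Cc" unfolding Gc_def G_def CTc_def Cc_def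
  by (rule of_real_hom.mat_hom_mult) (use C in auto)
lemma Mc: "Mc g \<in> carrier_mat (n1+n2) (n1+n2)" unfolding Mc_def Mmat_def using C by auto

lemma r1: "a \<in> carrier_vec n1 \<Longrightarrow> d \<in> carrier_vec n2 \<Longrightarrow> r1 g a d \<in> carrier_vec n1"
  unfolding r1_def using CTc by auto

lemma Mc_mult:
  assumes a: "a \<in> carrier_vec n1" and d: "d \<in> carrier_vec n2"
  shows "Mc g *\<^sub>v (a @\<^sub>v d) = r1 g a d @\<^sub>v ((-1) \<cdot>\<^sub>v (Cc *\<^sub>v r1 g a d))"
proof -
  have dc: "dim_col C = n1" "dim_row C = n2" using C by auto
  have L4: "(1 - 1) \<cdot>\<^sub>m 1\<^sub>m n2 + (g * 1) \<cdot>\<^sub>m (C * C\<^sup>T) = g \<cdot>\<^sub>m (C * C\<^sup>T)"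
    by (rule eq_matI) (use C in auto)
  have mCCT: "map_mat complex_of_real (C * C\<^sup>T) = Cc * CTc" unfolding Cc_def CTc_def
    by (rule of_real_hom.mat_hom_mult) (use C in auto)
  have "Mc g = four_block_mat (complex_of_real (1-g) \<cdot>\<^sub>m 1\<^sub>m n1) (complex_of_real (-g) \<cdot>\<^sub>m CTc)
      (complex_of_real (- (1 * (1 - g))) \<cdot>\<^sub>m Cc) (complex_of_real g \<cdot>\<^sub>m (Cc * CTc))"
    unfolding Mc_def Mmat_def dc L4
    by (subst map_four_block_mat[of _ n1 n1 _ n2 _ n2]) (use C in \<open>auto simp: map_smult_c mCCT Cc_def CTc_def\<close>)
  also have "\<dots> *\<^sub>v (a @\<^sub>v d) = (complex_of_real (1-g) \<cdot>\<^sub>m 1\<^sub>m n1 *\<^sub>v a + complex_of_real (-g) \<cdot>\<^sub>m CTc *\<^sub>v d)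
     @\<^sub>v (complex_of_real (- (1 * (1 - g))) \<cdot>\<^sub>m Cc *\<^sub>v a + complex_of_real g \<cdot>\<^sub>m (Cc * CTc) *\<^sub>v d)"
    by (rule four_block_mat_mult_vec[OF _ _ _ _ a d]) (use Cc CTc in auto)
  also have "complex_of_real (1-g) \<cdot>\<^sub>m 1\<^sub>m n1 *\<^sub>v a + complex_of_real (-g) \<cdot>\<^sub>m CTc *\<^sub>v d = r1 g a d"
    unfolding r1_def using a d CTc by (simp add: smult_mv[of _ n1 n1] smult_mv[of _ n1 n2])
  also have "complex_of_real (- (1 * (1 - g))) \<cdot>\<^sub>m Cc *\<^sub>v a + complex_of_real g \<cdot>\<^sub>m (Cc * CTc) *\<^sub>v d
      = (-1) \<cdot>\<^sub>v (Cc *\<^sub>v r1 g a d)"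
  proof -
    have e1: "complex_of_real (- (1 * (1 - g))) \<cdot>\<^sub>m Cc *\<^sub>v a = complex_of_real (- (1 * (1 - g))) \<cdot>\<^sub>v (Cc *\<^sub>v a)"
      by (rule smult_mv[OF Cc a])
    have e2: "complex_of_real g \<cdot>\<^sub>m (Cc * CTc) *\<^sub>v d = complex_of_real g \<cdot>\<^sub>v (Cc *\<^sub>v (CTc *\<^sub>v d))"
      using smult_mv[of "Cc * CTc" n2 n2 d] Cc CTc d by auto
    have e3: "Cc *\<^sub>v r1 g a d = complex_of_real (1-g) \<cdot>\<^sub>v (Cc *\<^sub>v a) + complex_of_real (-g) \<cdot>\<^sub>v (Cc *\<^sub>v (CTc *\<^sub>v d))"
      unfolding r1_def using Cc CTc a d
      by (simp add: mult_add_distrib_mat_vec[of _ n2 n1] mult_mat_vec[of _ n2 n1])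
    show ?thesis unfolding e1 e2 e3
      by (rule eq_vecI) (use Cc CTc a d in \<open>auto simp: algebra_simps\<close>)
  qed
  finally show ?thesis .
qed

end


lemma append_nonzero: assumes a: "a \<in> carrier_vec n" and d: "d \<in> carrier_vec m" and a0: "a \<noteq> 0\<^sub>v n"
  shows "a @\<^sub>v d \<noteq> 0\<^sub>v (n+m)"
proof
  assume "a @\<^sub>v d = 0\<^sub>v (n+m)"
  hence "\<forall>i<n. a $ i = 0" using a d
    by (metis add.commute carrier_vecD index_append_vec(1) index_zero_vec(1) trans_less_add2)
  hence "a = 0\<^sub>v n" using a by (intro eq_vecI) auto
  with a0 show False by simp
qed

context setting begin

lemma r1_special: assumes a: "a \<in> carrier_vec n1"
  shows "r1 g a ((-1) \<cdot>\<^sub>v (Cc *\<^sub>v a)) = complex_of_real (1-g) \<cdot>\<^sub>v a + complex_of_real g \<cdot>\<^sub>v (Gc *\<^sub>v a)"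
proof -
  have "CTc *\<^sub>v ((-1) \<cdot>\<^sub>v (Cc *\<^sub>v a)) = (-1) \<cdot>\<^sub>v (Gc *\<^sub>v a)"
    unfolding Gc_prod using CTc Cc a by (simp add: mult_mat_vec[of _ n1 n2])
  thus ?thesis unfolding r1_def
    by (intro eq_vecI) (use a Gc in auto)
qed

lemma spec_Mc:
  assumes g: "g > 0" and ds: "spectrum Gc = complex_of_real ` set ds"
  shows "(\<lambda>\<mu>. complex_of_real (1 - g*(1-\<mu>))) ` set ds \<subseteq> spectrum (Mc g)"
    and "spectrum (Mc g) \<subseteq> insert 0 ((\<lambda>\<mu>. complex_of_real (1 - g*(1-\<mu>))) ` set ds)"
proof -
  show "(\<lambda>\<mu>. complex_of_real (1 - g*(1-\<mu>))) ` set ds \<subseteq> spectrum (Mc g)"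
  proof
    fix x assume "x \<in> (\<lambda>\<mu>. complex_of_real (1 - g*(1-\<mu>))) ` set ds"
    then obtain \<mu> where mu: "\<mu> \<in> set ds" and x: "x = complex_of_real (1 - g*(1-\<mu>))" by auto
    have "complex_of_real \<mu> \<in> spectrum Gc" using mu ds by auto
    then obtain a where ev: "eigenvector Gc a (complex_of_real \<mu>)"
      unfolding spectrum_def eigenvalue_def by auto
    hence a: "a \<in> carrier_vec n1" and a0: "a \<noteq> 0\<^sub>v n1" and Ga: "Gc *\<^sub>v a = complex_of_real \<mu> \<cdot>\<^sub>v a"
      using Gc unfolding eigenvector_def by auto
    define d where "d = (-1) \<cdot>\<^sub>v (Cc *\<^sub>v a)"
    have d: "d \<in> carrier_vec n2" unfolding d_def using Cc a by auto
    have r: "r1 g a d = x \<cdot>\<^sub>v a" unfolding d_def r1_special[OF a] Ga x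
      by (intro eq_vecI) (use a in \<open>auto simp: algebra_simps\<close>)
    have "Mc g *\<^sub>v (a @\<^sub>v d) = (x \<cdot>\<^sub>v a) @\<^sub>v ((-1) \<cdot>\<^sub>v (Cc *\<^sub>v (x \<cdot>\<^sub>v a)))"
      unfolding Mc_mult[OF a d] r ..
    also have "(-1) \<cdot>\<^sub>v (Cc *\<^sub>v (x \<cdot>\<^sub>v a)) = x \<cdot>\<^sub>v d"
      unfolding d_def using Cc a by (simp add: mult_mat_vec[of _ n2 n1] smult_smult_assoc mult.commute)
    finally have "Mc g *\<^sub>v (a @\<^sub>v d) = x \<cdot>\<^sub>v (a @\<^sub>v d)" by (simp add: smult_append)
    moreover have "a @\<^sub>v d \<in> carrier_vec (n1+n2)" using a d by auto
    moreover have "a @\<^sub>v d \<noteq> 0\<^sub>v (n1+n2)" by (rule append_nonzero[OF a d a0])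
    ultimately have "eigenvector (Mc g) (a @\<^sub>v d) x" unfolding eigenvector_def using Mc[of g] by auto
    thus "x \<in> spectrum (Mc g)" unfolding spectrum_def eigenvalue_def by auto
  qed
  show "spectrum (Mc g) \<subseteq> insert 0 ((\<lambda>\<mu>. complex_of_real (1 - g*(1-\<mu>))) ` set ds)"
  proof
    fix k assume "k \<in> spectrum (Mc g)"
    then obtain u where ev: "eigenvector (Mc g) u k" unfolding spectrum_def eigenvalue_def by auto
    hence u: "u \<in> carrier_vec (n1+n2)" and u0: "u \<noteq> 0\<^sub>v (n1+n2)" and Mu: "Mc g *\<^sub>v u = k \<cdot>\<^sub>v u"
      using Mc[of g] unfolding eigenvector_def by auto
    show "k \<in> insert 0 ((\<lambda>\<mu>. complex_of_real (1 - g*(1-\<mu>))) ` set ds)"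
    proof (cases "k = 0")
      case True thus ?thesis by simp
    next
      case k0: False
      define a where "a = vec_first u n1"
      define d where "d = vec_last u n2"
      have a: "a \<in> carrier_vec n1" and d: "d \<in> carrier_vec n2" unfolding a_def d_def by auto
      have uad: "u = a @\<^sub>v d" unfolding a_def d_def using u by simp
      have "r1 g a d @\<^sub>v ((-1) \<cdot>\<^sub>v (Cc *\<^sub>v r1 g a d)) = (k \<cdot>\<^sub>v a) @\<^sub>v (k \<cdot>\<^sub>v d)"
        using Mu unfolding uad Mc_mult[OF a d] smult_append .
      hence e1: "r1 g a d = k \<cdot>\<^sub>v a" and e2: "(-1) \<cdot>\<^sub>v (Cc *\<^sub>v r1 g a d) = k \<cdot>\<^sub>v d"
        using r1[OF a d] a by (subst (asm) append_vec_eq; auto)+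
      have "k \<cdot>\<^sub>v d = k \<cdot>\<^sub>v ((-1) \<cdot>\<^sub>v (Cc *\<^sub>v a))"
        using e2 unfolding e1 using Cc a by (simp add: mult_mat_vec[of _ n2 n1] smult_smult_assoc mult.commute)
      hence "(1/k) \<cdot>\<^sub>v (k \<cdot>\<^sub>v d) = (1/k) \<cdot>\<^sub>v (k \<cdot>\<^sub>v ((-1) \<cdot>\<^sub>v (Cc *\<^sub>v a)))" by simp
      hence dd: "d = (-1) \<cdot>\<^sub>v (Cc *\<^sub>v a)" using k0 by (simp add: smult_smult_assoc)
      have a0: "a \<noteq> 0\<^sub>v n1"
      proof
        assume "a = 0\<^sub>v n1"
        hence "d = 0\<^sub>v n2" unfolding dd using Cc by auto
        with \<open>a = 0\<^sub>v n1\<close> have "u = 0\<^sub>v (n1+n2)" unfolding uad by (intro eq_vecI) auto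
        with u0 show False by simp
      qed
      define mc where "mc = (k - complex_of_real (1-g)) / complex_of_real g"
      have "complex_of_real (1-g) \<cdot>\<^sub>v a + complex_of_real g \<cdot>\<^sub>v (Gc *\<^sub>v a) = k \<cdot>\<^sub>v a"
        using e1 unfolding dd r1_special[OF a] .
      hence "Gc *\<^sub>v a = mc \<cdot>\<^sub>v a"
      proof (intro eq_vecI)
        fix i assume eq: "complex_of_real (1-g) \<cdot>\<^sub>v a + complex_of_real g \<cdot>\<^sub>v (Gc *\<^sub>v a) = k \<cdot>\<^sub>v a"
          and i: "i < dim_vec (mc \<cdot>\<^sub>v a)"
        hence "(complex_of_real (1-g) \<cdot>\<^sub>v a + complex_of_real g \<cdot>\<^sub>v (Gc *\<^sub>v a)) $ i = (k \<cdot>\<^sub>v a) $ i" by simp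
        hence "complex_of_real (1-g) * a $ i + complex_of_real g * (Gc *\<^sub>v a) $ i = k * a $ i"
          using i a Gc by simp
        thus "(Gc *\<^sub>v a) $ i = (mc \<cdot>\<^sub>v a) $ i" using i a g unfolding mc_def
          by (simp add: field_simps)
      qed (use a Gc in auto)
      hence "eigenvector Gc a mc" unfolding eigenvector_def using a a0 Gc by auto
      hence "mc \<in> spectrum Gc" unfolding spectrum_def eigenvalue_def by auto
      then obtain \<mu> where mu: "\<mu> \<in> set ds" and mcm: "mc = complex_of_real \<mu>" using ds by auto
      have "k = complex_of_real (1 - g*(1-\<mu>))" using mcm g unfolding mc_def
        by (simp add: field_simps)
      thus ?thesis using mu by auto
    qed
  qed
qed

lemma rho_M:
  assumes g: "g > 0" and ds: "spectrum Gc = complex_of_real ` set ds" and ne: "set ds \<noteq> {}"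
  shows "rho (Mmat C g 1) = Max ((\<lambda>\<mu>. \<bar>1 - g*(1-\<mu>)\<bar>) ` set ds)"
proof -
  define T where "T = (\<lambda>\<mu>. complex_of_real (1 - g*(1-\<mu>))) ` set ds"
  have fin: "finite (spectrum (Mc g))" by (rule card_finite_spectrum(1)[OF Mc])
  have T1: "T \<subseteq> spectrum (Mc g)" and T2: "spectrum (Mc g) \<subseteq> insert 0 T"
    using spec_Mc[OF g ds] unfolding T_def by auto
  have nT: "norm ` T = (\<lambda>\<mu>. \<bar>1 - g*(1-\<mu>)\<bar>) ` set ds" unfolding T_def by (simp only: image_image norm_of_real)
  have finT: "finite (norm ` T)" unfolding nT by simp
  have neT: "norm ` T \<noteq> {}" unfolding nT using ne by simp
  have "rho (Mmat C g 1) = Max (norm ` spectrum (Mc g))"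
    unfolding rho_def spectral_radius_def Mc_def ..
  also have "\<dots> = Max (norm ` T)"
  proof (rule antisym)
    show "Max (norm ` spectrum (Mc g)) \<le> Max (norm ` T)"
    proof (rule Max.boundedI)
      show "finite (norm ` spectrum (Mc g))" using fin by simp
      show "norm ` spectrum (Mc g) \<noteq> {}" using T1 neT by auto
      fix y assume "y \<in> norm ` spectrum (Mc g)"
      then obtain x where x: "x \<in> spectrum (Mc g)" and y: "y = norm x" by auto
      show "y \<le> Max (norm ` T)"
      proof (cases "x = 0")
        case True
        obtain z where zT: "z \<in> T" using neT by auto
        have "norm z \<le> Max (norm ` T)" using finT zT by auto
        hence "norm (0::complex) \<le> Max (norm ` T)" using norm_ge_zero[of z] by (simp del: norm_ge_zero)
        thus ?thesis using True y by simp
      next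
        case False
        hence "x \<in> T" using x T2 by auto
        thus ?thesis unfolding y using finT by auto
      qed
    qed
    show "Max (norm ` T) \<le> Max (norm ` spectrum (Mc g))"
      by (rule Max_mono) (use T1 neT fin in auto)
  qed
  finally show ?thesis unfolding nT .
qed

end


lemma sylvester_pt:
  fixes C :: "real mat" and x :: real
  assumes C: "C \<in> carrier_mat n2 n1" and x: "x \<noteq> 0"
  shows "x^n2 * det (x \<cdot>\<^sub>m 1\<^sub>m n1 - C\<^sup>T * C) = x^n1 * det (x \<cdot>\<^sub>m 1\<^sub>m n2 - C * C\<^sup>T)"
proof -
  have CT: "C\<^sup>T \<in> carrier_mat n1 n2" using C by auto
  define K where "K = four_block_mat (x \<cdot>\<^sub>m 1\<^sub>m n1) (C\<^sup>T) C (1\<^sub>m n2)"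
  define P where "P = four_block_mat (1\<^sub>m n1) ((-1) \<cdot>\<^sub>m C\<^sup>T) (0\<^sub>m n2 n1) (1\<^sub>m n2)"
  define Q where "Q = four_block_mat (1\<^sub>m n1) (0\<^sub>m n1 n2) ((-(1/x)) \<cdot>\<^sub>m C) (1\<^sub>m n2)"
  have K: "K \<in> carrier_mat (n1+n2) (n1+n2)" unfolding K_def using C CT by auto
  have P: "P \<in> carrier_mat (n1+n2) (n1+n2)" unfolding P_def using C CT by auto
  have Q: "Q \<in> carrier_mat (n1+n2) (n1+n2)" unfolding Q_def using C CT by auto
  have dP: "det P = 1" unfolding P_def
    by (subst det_four_block_mat_lower_left_zero[of _ n1 _ n2]) (use CT in auto)
  have dQ: "det Q = 1" unfolding Q_def
    by (subst det_four_block_mat_upper_right_zero[of _ n1 _ n2]) (use C in auto)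
  have PK: "P * K = four_block_mat (x \<cdot>\<^sub>m 1\<^sub>m n1 - C\<^sup>T * C) (0\<^sub>m n1 n2) C (1\<^sub>m n2)"
  proof -
    have "P * K = four_block_mat (1\<^sub>m n1 * (x \<cdot>\<^sub>m 1\<^sub>m n1) + (-1) \<cdot>\<^sub>m C\<^sup>T * C)
       (1\<^sub>m n1 * C\<^sup>T + (-1) \<cdot>\<^sub>m C\<^sup>T * 1\<^sub>m n2) (0\<^sub>m n2 n1 * (x \<cdot>\<^sub>m 1\<^sub>m n1) + 1\<^sub>m n2 * C)
       (0\<^sub>m n2 n1 * C\<^sup>T + 1\<^sub>m n2 * 1\<^sub>m n2)"
      unfolding P_def K_def by (rule mult_four_block_mat) (use C CT in auto)
    also have "\<dots> = four_block_mat (x \<cdot>\<^sub>m 1\<^sub>m n1 - C\<^sup>T * C) (0\<^sub>m n1 n2) C (1\<^sub>m n2)"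
    proof (rule cong_four_block_mat)
      show "1\<^sub>m n1 * (x \<cdot>\<^sub>m 1\<^sub>m n1) + (-1) \<cdot>\<^sub>m C\<^sup>T * C = x \<cdot>\<^sub>m 1\<^sub>m n1 - C\<^sup>T * C"
        using C CT by (subst mult_smult_assoc_mat[of _ n1 n2]) (auto intro!: eq_matI)
      show "1\<^sub>m n1 * C\<^sup>T + (-1) \<cdot>\<^sub>m C\<^sup>T * 1\<^sub>m n2 = 0\<^sub>m n1 n2"
        using C CT by (auto intro!: eq_matI)
      show "0\<^sub>m n2 n1 * (x \<cdot>\<^sub>m 1\<^sub>m n1) + 1\<^sub>m n2 * C = C"
        using C CT by (auto intro!: eq_matI)
      show "0\<^sub>m n2 n1 * C\<^sup>T + 1\<^sub>m n2 * 1\<^sub>m n2 = 1\<^sub>m n2"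
        using C CT by (auto intro!: eq_matI)
    qed
    finally show ?thesis .
  qed
  have QK: "Q * K = four_block_mat (x \<cdot>\<^sub>m 1\<^sub>m n1) (C\<^sup>T) (0\<^sub>m n2 n1) (1\<^sub>m n2 - (1/x) \<cdot>\<^sub>m (C * C\<^sup>T))"
  proof -
    have "Q * K = four_block_mat (1\<^sub>m n1 * (x \<cdot>\<^sub>m 1\<^sub>m n1) + 0\<^sub>m n1 n2 * C)
       (1\<^sub>m n1 * C\<^sup>T + 0\<^sub>m n1 n2 * 1\<^sub>m n2) ((- (1 / x)) \<cdot>\<^sub>m C * (x \<cdot>\<^sub>m 1\<^sub>m n1) + 1\<^sub>m n2 * C)
       ((- (1 / x)) \<cdot>\<^sub>m C * C\<^sup>T + 1\<^sub>m n2 * 1\<^sub>m n2)"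
      unfolding Q_def K_def by (rule mult_four_block_mat) (use C CT in auto)
    also have "\<dots> = four_block_mat (x \<cdot>\<^sub>m 1\<^sub>m n1) (C\<^sup>T) (0\<^sub>m n2 n1) (1\<^sub>m n2 - (1/x) \<cdot>\<^sub>m (C * C\<^sup>T))"
    proof (rule cong_four_block_mat)
      show "1\<^sub>m n1 * (x \<cdot>\<^sub>m 1\<^sub>m n1) + 0\<^sub>m n1 n2 * C = x \<cdot>\<^sub>m 1\<^sub>m n1"
        using C CT by (auto intro!: eq_matI)
      show "1\<^sub>m n1 * C\<^sup>T + 0\<^sub>m n1 n2 * 1\<^sub>m n2 = C\<^sup>T"
        using C CT by (auto intro!: eq_matI)
      show "(- (1 / x)) \<cdot>\<^sub>m C * (x \<cdot>\<^sub>m 1\<^sub>m n1) + 1\<^sub>m n2 * C = 0\<^sub>m n2 n1"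
        using C CT x by (auto intro!: eq_matI)
      show "(- (1 / x)) \<cdot>\<^sub>m C * C\<^sup>T + 1\<^sub>m n2 * 1\<^sub>m n2 = 1\<^sub>m n2 - (1/x) \<cdot>\<^sub>m (C * C\<^sup>T)"
        using C CT by (subst mult_smult_assoc_mat[of _ n2 n1]) (auto intro!: eq_matI)
    qed
    finally show ?thesis .
  qed
  have "det K = det (x \<cdot>\<^sub>m 1\<^sub>m n1 - C\<^sup>T * C)"
  proof -
    have "det (P * K) = det P * det K" by (rule det_mult[OF P K])
    also have "det (P * K) = det (x \<cdot>\<^sub>m 1\<^sub>m n1 - C\<^sup>T * C) * det (1\<^sub>m n2)" unfolding PK
      by (rule det_four_block_mat_upper_right_zero[of _ n1 _ n2]) (use C CT in auto)
    finally show ?thesis using dP by simp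
  qed
  moreover have "det K = x^n1 * det (1\<^sub>m n2 - (1/x) \<cdot>\<^sub>m (C * C\<^sup>T))"
  proof -
    have "det (Q * K) = det Q * det K" by (rule det_mult[OF Q K])
    also have "det (Q * K) = det (x \<cdot>\<^sub>m 1\<^sub>m n1) * det (1\<^sub>m n2 - (1/x) \<cdot>\<^sub>m (C * C\<^sup>T))" unfolding QK
      by (rule det_four_block_mat_lower_left_zero[of _ n1 _ n2]) (use C CT in auto)
    finally show ?thesis using dQ by (simp add: det_smult)
  qed
  moreover have "det (x \<cdot>\<^sub>m 1\<^sub>m n2 - C * C\<^sup>T) = x^n2 * det (1\<^sub>m n2 - (1/x) \<cdot>\<^sub>m (C * C\<^sup>T))"
  proof -
    have "x \<cdot>\<^sub>m 1\<^sub>m n2 - C * C\<^sup>T = x \<cdot>\<^sub>m (1\<^sub>m n2 - (1/x) \<cdot>\<^sub>m (C * C\<^sup>T))"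
      using C CT x by (auto intro!: eq_matI simp: field_simps)
    thus ?thesis using C by (simp add: det_smult)
  qed
  ultimately show ?thesis by (simp add: power_add algebra_simps)
qed


lemma charpoly_eval: "(A::real mat) \<in> carrier_mat n n \<Longrightarrow> poly (char_poly A) x = det (x \<cdot>\<^sub>m 1\<^sub>m n - A)"
proof -
  assume A: "A \<in> carrier_mat n n"
  have "- char_matrix A x = x \<cdot>\<^sub>m 1\<^sub>m n - A"
    unfolding char_matrix_def using A by (auto intro!: eq_matI)
  thus ?thesis using char_poly_matrix[OF A] by simp
qed

lemma sylv_poly:
  fixes C :: "real mat"
  assumes C: "C \<in> carrier_mat n2 n1"
  shows "monom 1 n2 * char_poly (C\<^sup>T * C) = monom 1 n1 * char_poly (C * C\<^sup>T)"
proof (rule ccontr)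
  let ?p = "monom 1 n2 * char_poly (C\<^sup>T * C) - monom 1 n1 * char_poly (C * C\<^sup>T)"
  assume "\<not> ?thesis"
  hence p0: "?p \<noteq> 0" by simp
  have "UNIV - {0} \<subseteq> {x. poly ?p x = 0}"
  proof
    fix x :: real assume "x \<in> UNIV - {0}"
    hence x: "x \<noteq> 0" by simp
    have G: "C\<^sup>T * C \<in> carrier_mat n1 n1" and H: "C * C\<^sup>T \<in> carrier_mat n2 n2" using C by auto
    show "x \<in> {x. poly ?p x = 0}"
      using sylvester_pt[OF C x] charpoly_eval[OF G, of x] charpoly_eval[OF H, of x]
      by (simp add: poly_monom)
  qed
  moreover have "infinite (UNIV - {0::real})" by (simp add: infinite_UNIV_char_0)
  ultimately show False using poly_roots_finite[OF p0] finite_subset by blast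
qed

lemma proots_monom: "proots (monom (1::real) n) = replicate_mset n 0"
proof -
  have "monom (1::real) n = (\<Prod>d\<leftarrow>replicate n 0. [:- d, 1:])"
    by (simp add: monom_altdef prod_list_replicate)
  thus ?thesis using proots_lin[of "replicate n 0"] by simp
qed

lemma charpoly_nz: "(A::real mat) \<in> carrier_mat n n \<Longrightarrow> char_poly A \<noteq> 0"
  using degree_monic_char_poly[of A n] by auto

lemma proots_rel:
  fixes C :: "real mat" and ds :: "real list"
  assumes C: "C \<in> carrier_mat n2 n1" and cp: "char_poly (C\<^sup>T * C) = (\<Prod>d\<leftarrow>ds. [:- d, 1:])"
  shows "replicate_mset n1 0 + proots (char_poly (C * C\<^sup>T)) = replicate_mset n2 0 + mset ds"
proof -
  have H: "C * C\<^sup>T \<in> carrier_mat n2 n2" using C by auto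
  have nzG: "(\<Prod>d\<leftarrow>ds. [:- d, 1:]) \<noteq> (0 :: real poly)"
  proof -
    have "0 \<notin> (\<lambda>d. [:- d, 1:]) ` set ds" by auto
    thus ?thesis by (simp add: prod_list_zero_iff)
  qed
  have "proots (monom 1 n2 * char_poly (C\<^sup>T * C)) = replicate_mset n2 0 + mset ds"
    unfolding cp by (subst proots_mult) (use nzG in \<open>auto simp: proots_monom proots_lin\<close>)
  moreover have "proots (monom 1 n1 * char_poly (C * C\<^sup>T)) = replicate_mset n1 0 + proots (char_poly (C * C\<^sup>T))"
    by (subst proots_mult) (use charpoly_nz[OF H] in \<open>auto simp: proots_monom\<close>)
  ultimately show ?thesis using sylv_poly[OF C] by simp
qed

lemma sorted_last_Max: "sorted xs \<Longrightarrow> xs \<noteq> [] \<Longrightarrow> last xs = Max (set (xs::real list))"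
proof (induction xs rule: rev_induct)
  case (snoc x xs)
  thus ?case by (auto simp: sorted_append intro!: Max_eqI[symmetric])
qed simp

lemma sorted_hd_Min: "sorted xs \<Longrightarrow> xs \<noteq> [] \<Longrightarrow> hd xs = Min (set (xs::real list))"
  by (cases xs) (auto intro!: Min_eqI[symmetric])


lemma rel_mem:
  assumes rel: "replicate_mset n1 0 + P = replicate_mset n2 0 + mset (ds::real list)"
    and x: "x \<in># P"
  shows "x = 0 \<or> x \<in> set ds"
proof -
  have "x \<in># replicate_mset n1 0 + P" using x by simp
  hence "x \<in># replicate_mset n2 0 + mset ds" unfolding rel .
  thus ?thesis by (auto split: if_splits)
qed

lemma lam1_aux:
  assumes rel: "replicate_mset n1 0 + P = replicate_mset n2 0 + mset (ds::real list)"
    and len: "length ds = n1" and n2: "n2 > 0" and nn: "\<forall>d\<in>set ds. 0 \<le> d" and ne: "ds \<noteq> []"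
  shows "rev (sorted_list_of_multiset P) ! 0 = Max (set ds)"
proof -
  define M where "M = Max (set ds)"
  have MS: "M \<in> set ds" unfolding M_def using ne by simp
  have M0: "M \<ge> 0" using MS nn by auto
  have le: "x \<le> M" if "x \<in># P" for x
    using rel_mem[OF rel that] M0 unfolding M_def by auto
  have "size (replicate_mset n1 0 + P) = size (replicate_mset n2 0 + mset ds)" unfolding rel ..
  hence sz: "size P = n2" using len by simp
  hence Pne: "P \<noteq> {#}" using n2 by auto
  have MP: "Max (set_mset P) = M"
  proof (cases "M > 0")
    case True
    have cM: "count (mset ds) M \<ge> 1" using MS by (simp add: Suc_le_eq)
    have "count (replicate_mset n2 0 + mset ds) M \<ge> 1" using cM by (simp only: count_union)
    hence "count (replicate_mset n1 0 + P) M \<ge> 1" unfolding rel .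
    hence "M \<in># P" using True by simp
    thus ?thesis using le by (intro Max_eqI) auto
  next
    case False
    hence M00: "M = 0" using M0 by simp
    obtain y where y: "y \<in># P" using Pne by auto
    have all0: "x = 0" if "x \<in># P" for x
      using rel_mem[OF rel that] le[OF that] nn M00 by auto
    have "y = 0" using all0 y .
    thus ?thesis using y all0 M00 by (intro Max_eqI) auto
  qed
  define xs where "xs = sorted_list_of_multiset P"
  have xs: "sorted xs" "set xs = set_mset P" unfolding xs_def by auto
  have xsne: "xs \<noteq> []" using Pne unfolding xs_def
    by (metis mset_sorted_list_of_multiset mset_zero_iff)
  have "rev xs ! 0 = last xs" using xsne by (simp add: rev_nth last_conv_nth)
  also have "\<dots> = Max (set xs)" by (rule sorted_last_Max[OF xs(1) xsne])
  finally show ?thesis using MP xs(2) unfolding xs_def M_def by simp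
qed

lemma lamr_aux:
  assumes rel: "replicate_mset n1 0 + P = replicate_mset n2 0 + mset (ds::real list)"
    and len: "length ds = n1" and pos: "\<forall>d\<in>set ds. 0 < d" and n1: "n1 > 0"
  shows "rev (sorted_list_of_multiset P) ! (n1 - 1) = Min (set ds)"
proof -
  have "count (replicate_mset n1 0 + P) 0 = count (replicate_mset n2 0 + mset ds) 0" unfolding rel ..
  moreover have cz: "count (mset ds) 0 = 0" using pos by (auto simp: count_eq_zero_iff)
  ultimately have c0: "n1 + count P 0 = n2" by (simp only: count_union count_replicate_mset) simp
  define k where "k = n2 - n1"
  have PP: "P = mset (replicate k 0 @ ds)"
  proof (rule multiset_eqI)
    fix v
    show "count P v = count (mset (replicate k 0 @ ds)) v"
    proof (cases "v = 0")
      case True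
      have e: "count (mset (replicate k 0 @ ds)) v = k + count (mset ds) 0"
        using True by (simp only: mset_append count_union mset_replicate count_replicate_mset) simp
      show ?thesis unfolding e using cz c0 True unfolding k_def by (simp only:)
    next
      case False
      have "count (replicate_mset n1 0 + P) v = count (replicate_mset n2 0 + mset ds) v" unfolding rel ..
      thus ?thesis using False by simp
    qed
  qed
  have "sorted_list_of_multiset P = sort (replicate k 0 @ ds)" unfolding PP by (rule sorted_list_of_multiset_mset)
  also have "\<dots> = replicate k 0 @ sort ds"
    by (rule properties_for_sort) (use pos in \<open>auto simp: sorted_append\<close>)
  finally have sl: "sorted_list_of_multiset P = replicate k 0 @ sort ds" .
  have ls: "length (rev (sort ds)) = n1" using len by simp
  have sne: "sort ds \<noteq> []" using n1 len by (metis length_sort list.size(3) less_irrefl)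
  have "rev (sorted_list_of_multiset P) ! (n1 - 1) = rev (sort ds) ! (n1 - 1)"
    unfolding sl using n1 ls by (simp add: nth_append)
  also have "\<dots> = sort ds ! 0" using n1 len by (simp add: rev_nth)
  also have "\<dots> = hd (sort ds)" using sne by (simp add: hd_conv_nth)
  also have "\<dots> = Min (set (sort ds))" by (rule sorted_hd_Min) (use sne in auto)
  finally show ?thesis by simp
qed


theorem mainTheorem9:
  fixes A1 A2 :: "real mat" and m n1 n2 :: nat
  assumes "A1 \<in> carrier_mat m n1" and "A2 \<in> carrier_mat m n2"
    and "vec_space.rank m (hcat A1 A2) = n1 + n2"
    and "A1\<^sup>T * A1 = 1\<^sub>m n1" and "A2\<^sup>T * A2 = 1\<^sub>m n2"
    and "A2\<^sup>T * A1 \<noteq> 0\<^sub>m n2 n1"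
  shows "let C = A2\<^sup>T * A1; r = vec_space.rank n2 C;
             l1 = lam 1 (C * C\<^sup>T); lr = lam r (C * C\<^sup>T)
         in (r < n1 \<longrightarrow>
               Inf ((\<lambda>g. rho (Mmat C g 1)) ` {0<..}) = l1 / (2 - l1)
             \<and> rho (Mmat C (2 / (2 - l1)) 1) = l1 / (2 - l1))
          \<and> (r = n1 \<longrightarrow>
               Inf ((\<lambda>g. rho (Mmat C g 1)) ` {0<..}) = (l1 - lr) / (2 - l1 - lr)
             \<and> (n1 > 1 \<longrightarrow> rho (Mmat C (2 / (2 - l1 - lr)) 1) = (l1 - lr) / (2 - l1 - lr)))"
proof -
  interpret S: setting A1 A2 m n1 n2
    by unfold_locales (use assms in auto)
  have Cd: "A2\<^sup>T * A1 = S.C" unfolding S.C_def ..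
  have C: "S.C \<in> carrier_mat n2 n1" by (rule S.C)
  have Cnz: "S.C \<noteq> 0\<^sub>m n2 n1" using assms(6) Cd by simp
  have n1: "n1 > 0"
  proof (rule ccontr)
    assume "\<not> n1 > 0"
    hence "S.C = 0\<^sub>m n2 n1" using C by (intro eq_matI) auto
    with Cnz show False by simp
  qed
  have n2: "n2 > 0"
  proof (rule ccontr)
    assume "\<not> n2 > 0"
    hence "S.C = 0\<^sub>m n2 n1" using C by (intro eq_matI) auto
    with Cnz show False by simp
  qed
  obtain ds where len: "length ds = n1" and cpG: "char_poly S.G = (\<Prod>d\<leftarrow>ds. [:- d, 1:])"
    and rng: "\<forall>d\<in>set ds. 0 \<le> d \<and> d < 1" and spec: "spectrum S.Gc = complex_of_real ` set ds"
    using S.split by blast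
  have ne: "set ds \<noteq> {}" using len n1 by auto
  define f where "f g = Max ((\<lambda>\<mu>. \<bar>1 - g*(1-\<mu>)\<bar>) ` set ds)" for g
  have rhof: "rho (Mmat S.C g 1) = f g" if "g > 0" for g
    unfolding f_def by (rule S.rho_M[OF that spec ne])
  have img: "(\<lambda>g. rho (Mmat S.C g 1)) ` {0<..} = f ` {0<..}"
    by (rule image_cong) (auto simp: rhof)
  define a where "a = Max (set ds)"
  define b where "b = Min (set ds)"
  have aS: "a \<in> set ds" and bS: "b \<in> set ds" unfolding a_def b_def using ne by auto
  have "a < 1" "b < 1" using rng aS bS by auto
  hence gs: "2 / (2 - a - b) > 0" by simp
  have opt1: "Inf (f ` {0<..}) = (a - b)/(2 - a - b)"
    and opt2: "f (2/(2 - a - b)) = (a - b)/(2 - a - b)"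
    using opt_lemma[of "set ds" f] rng ne unfolding f_def a_def b_def by auto
  have Inf: "Inf ((\<lambda>g. rho (Mmat S.C g 1)) ` {0<..}) = (a - b)/(2 - a - b)"
    unfolding img opt1 ..
  have rgs: "rho (Mmat S.C (2/(2 - a - b)) 1) = (a - b)/(2 - a - b)"
    using rhof[OF gs] opt2 by simp
  have rel: "replicate_mset n1 0 + proots (char_poly (S.C * S.C\<^sup>T)) = replicate_mset n2 0 + mset ds"
    by (rule proots_rel[OF C]) (use cpG in \<open>simp add: S.G_def\<close>)
  have l1: "lam 1 (S.C * S.C\<^sup>T) = a"
    unfolding lam_def eigs_desc_def a_def
    using lam1_aux[OF rel len n2] rng ne by auto
  have rle: "vec_space.rank n2 S.C \<le> n1"
    using vec_space.rank_le_nc[OF C] .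
  show ?thesis
    unfolding Let_def Cd
  proof (intro conjI impI)
    assume r: "vec_space.rank n2 S.C < n1"
    obtain w where w: "w \<in> carrier_vec n1" "w \<noteq> 0\<^sub>v n1" "S.C *\<^sub>v w = 0\<^sub>v n2"
      using rank_kernel2[OF C] r by auto
    have "S.G *\<^sub>v w = 0 \<cdot>\<^sub>v w" unfolding S.G_def using w C by auto
    hence "eigenvalue S.G 0" unfolding eigenvalue_def eigenvector_def using w S.G by auto
    hence "poly (char_poly S.G) 0 = 0" using eigenvalue_root_char_poly[OF S.G] by simp
    hence "0 \<in> set ds" unfolding cpG by (auto simp: poly_prod_list_zero_iff)
    hence b0: "b = 0" unfolding b_def using rng by (intro Min_eqI) auto
    show "Inf ((\<lambda>g. rho (Mmat S.C g 1)) ` {0<..}) = lam 1 (S.C * S.C\<^sup>T) / (2 - lam 1 (S.C * S.C\<^sup>T))"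
      using Inf unfolding l1 b0 by simp
    show "rho (Mmat S.C (2 / (2 - lam 1 (S.C * S.C\<^sup>T))) 1) = lam 1 (S.C * S.C\<^sup>T) / (2 - lam 1 (S.C * S.C\<^sup>T))"
      using rgs unfolding l1 b0 by simp
  next
    assume r: "vec_space.rank n2 S.C = n1"
    have pos: "\<forall>d\<in>set ds. 0 < d"
    proof (rule ccontr)
      assume "\<not> ?thesis"
      then obtain d where d: "d \<in> set ds" "\<not> 0 < d" by auto
      hence "d = 0" using rng by fastforce
      hence "0 \<in> set ds" using d by simp
      hence "complex_of_real 0 \<in> spectrum S.Gc" unfolding spec by blast
      hence "eigenvalue S.Gc 0" unfolding spectrum_def by simp
      from S.eigval_Gc[OF this] obtain w where "w \<in> carrier_vec n1" "w \<noteq> 0\<^sub>v n1" "S.C *\<^sub>v w = 0\<^sub>v n2"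
        by auto
      with rank_kernel[OF C r] show False by blast
    qed
    have lr: "lam n1 (S.C * S.C\<^sup>T) = b"
      unfolding lam_def eigs_desc_def b_def by (rule lamr_aux[OF rel len pos n1])
    show "Inf ((\<lambda>g. rho (Mmat S.C g 1)) ` {0<..}) =
      (lam 1 (S.C * S.C\<^sup>T) - lam (vec_space.rank n2 S.C) (S.C * S.C\<^sup>T)) /
      (2 - lam 1 (S.C * S.C\<^sup>T) - lam (vec_space.rank n2 S.C) (S.C * S.C\<^sup>T))"
      unfolding r l1 lr by (rule Inf)
    show "rho (Mmat S.C (2 / (2 - lam 1 (S.C * S.C\<^sup>T) - lam (vec_space.rank n2 S.C) (S.C * S.C\<^sup>T))) 1) =
      (lam 1 (S.C * S.C\<^sup>T) - lam (vec_space.rank n2 S.C) (S.C * S.C\<^sup>T)) /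
      (2 - lam 1 (S.C * S.C\<^sup>T) - lam (vec_space.rank n2 S.C) (S.C * S.C\<^sup>T))"
      unfolding r l1 lr by (rule rgs)
  qed
qed


end
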